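(* Let $\mathcal T$ be an $n$-leaf tree with $n\ge 3$ and nonnegative edge weights, and let $v_{\mathcal T}$ be its tree game. - If all internal edge weights are zero, then the core of $(N,v_{\mathcal T})$ consists of the single vector $\vec\ell=(\alpha_1,\dots,\alpha_n)$ of leaf weights. - Otherwise (some internal edge has positive weight), the core is empty.
   Context: An $n$-leaf tree here is an unrooted tree whose leaves are labeled by $N=\{1,\dots,n\}$ and whose internal vertices all have degree 3. The edge incident to leaf $i$ is the leaf edge $i$, with weight $\alpha_i$. The remaining $n-3$ edges are internal edges. All edge weights are real numbers $\ge 0$. The tree game $v_{\mathcal T}$ assigns to each $S\subseteq N$ the sum of the weights of the edges of the minimal subtree spanning the leaves in $S$. In particular $v_{\mathcal T}(\emptyset)=0$ and $v_{\mathcal T}(\{i\})=0$. The core of a cooperative game $(N,v)$ is the set of vectors $x\in\mathbb R^n$ with $\sum_{i\in S}x_i\ge v(S)$ for all $S\subseteq N$ and $\sum_{i\in N}x_i=v(N)$. *)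

theory Defs
  imports Complex_Main
begin

definition adj :: "'v set set \<Rightarrow> 'v \<Rightarrow> 'v \<Rightarrow> bool" where
  "adj E u v \<longleftrightarrow> {u, v} \<in> E \<and> u \<noteq> v"

definition is_graph :: "'v set \<Rightarrow> 'v set set \<Rightarrow> bool" where
  "is_graph V E \<longleftrightarrow> finite V \<and> (\<forall>e\<in>E. \<exists>u v. e = {u, v} \<and> u \<noteq> v \<and> u \<in> V \<and> v \<in> V)"

definition connected_graph :: "'v set \<Rightarrow> 'v set set \<Rightarrow> bool" where
  "connected_graph V E \<longleftrightarrow>
     (\<forall>u\<in>V. \<forall>v\<in>V. (u, v) \<in> {(a, b). adj E a b}\<^sup>*)"

definition is_tree :: "'v set \<Rightarrow> 'v set set \<Rightarrow> bool" where
  "is_tree V E \<longleftrightarrow> is_graph V E \<and> V \<noteq> {} \<and> connected_graph V E \<and> card E + 1 = card V"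

definition degree :: "'v set set \<Rightarrow> 'v \<Rightarrow> nat" where
  "degree E v = card {e \<in> E. v \<in> e}"

definition n_leaf_tree :: "nat \<Rightarrow> 'v set \<Rightarrow> 'v set set \<Rightarrow> (nat \<Rightarrow> 'v) \<Rightarrow> bool" where
  "n_leaf_tree n V E lf \<longleftrightarrow> is_tree V E \<and> inj_on lf {1..n} \<and> lf ` {1..n} \<subseteq> V \<and>
     (\<forall>i\<in>{1..n}. degree E (lf i) = 1) \<and>
     (\<forall>v\<in>V - lf ` {1..n}. degree E v = 3)"

definition leaf_edge :: "'v set set \<Rightarrow> (nat \<Rightarrow> 'v) \<Rightarrow> nat \<Rightarrow> 'v set" where
  "leaf_edge E lf i = (THE e. e \<in> E \<and> lf i \<in> e)"

definition internal_edge :: "nat \<Rightarrow> 'v set set \<Rightarrow> (nat \<Rightarrow> 'v) \<Rightarrow> 'v set \<Rightarrow> bool" where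
  "internal_edge n E lf e \<longleftrightarrow> e \<in> E \<and> (\<forall>i\<in>{1..n}. lf i \<notin> e)"

definition leaf_weights :: "nat \<Rightarrow> 'v set set \<Rightarrow> (nat \<Rightarrow> 'v) \<Rightarrow> ('v set \<Rightarrow> real) \<Rightarrow> nat \<Rightarrow> real" where
  "leaf_weights n E lf w i = (if i \<in> {1..n} then w (leaf_edge E lf i) else 0)"

definition path_from_to :: "'v set set \<Rightarrow> 'v list \<Rightarrow> 'v \<Rightarrow> 'v \<Rightarrow> bool" where
  "path_from_to E p u v \<longleftrightarrow> p \<noteq> [] \<and> hd p = u \<and> last p = v \<and> distinct p \<and>
     (\<forall>k. Suc k < length p \<longrightarrow> adj E (p ! k) (p ! Suc k))"

definition path_edges :: "'v list \<Rightarrow> 'v set set" where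
  "path_edges p = {{p ! k, p ! Suc k} | k. Suc k < length p}"

text \<open>Edges of the minimal subtree spanning the leaves in S: the union of the
  paths between pairs of leaves of S.\<close>

definition spanning_edges :: "'v set set \<Rightarrow> (nat \<Rightarrow> 'v) \<Rightarrow> nat set \<Rightarrow> 'v set set" where
  "spanning_edges E lf S =
     {e \<in> E. \<exists>i\<in>S. \<exists>j\<in>S. \<exists>p. path_from_to E p (lf i) (lf j) \<and> e \<in> path_edges p}"

definition tree_game :: "'v set set \<Rightarrow> (nat \<Rightarrow> 'v) \<Rightarrow> ('v set \<Rightarrow> real) \<Rightarrow> nat set \<Rightarrow> real" where
  "tree_game E lf w S = sum w (spanning_edges E lf S)"

definition core :: "nat \<Rightarrow> (nat set \<Rightarrow> real) \<Rightarrow> (nat \<Rightarrow> real) set" where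
  "core n v = {x. (\<forall>i. i \<notin> {1..n} \<longrightarrow> x i = 0) \<and>
      (\<forall>S. S \<subseteq> {1..n} \<longrightarrow> sum x S \<ge> v S) \<and> sum x {1..n} = v {1..n}}"

end

theory Submission imports Defs begin

lemma adj_sym: "adj E a b = adj E b a"
  unfolding adj_def by (auto simp: insert_commute)

lemma graph_finE: assumes "is_graph V E" shows "finite E" "E \<subseteq> Pow V"
proof -
  show "E \<subseteq> Pow V"
  proof
    fix e assume "e \<in> E"
    then obtain u v where "e = {u,v}" "u \<in> V" "v \<in> V" using assms unfolding is_graph_def by blast
    then show "e \<in> Pow V" by simp
  qed
  have "finite V" using assms unfolding is_graph_def by simp
  then have "finite (Pow V)" by simp
  then show "finite E" using \<open>E \<subseteq> Pow V\<close> by (rule finite_subset[rotated])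
qed

lemma adj_in_V: assumes "is_graph V E" "adj E a b" shows "a \<in> V" "b \<in> V"
proof -
  have "{a,b} \<in> E" using assms(2) unfolding adj_def by simp
  then obtain u v where uv: "{a,b} = {u,v}" "u \<in> V" "v \<in> V" using assms(1) unfolding is_graph_def by blast
  have "a \<in> {u,v}" "b \<in> {u,v}" using uv(1) by (metis insertI1, metis insertI1 insertI2)
  then show "a \<in> V" "b \<in> V" using uv by auto
qed

lemma conn_card:
  assumes g: "is_graph V E" and c: "connected_graph V E" and r: "r \<in> V"
  shows "card V \<le> card E + 1"
proof -
  let ?R = "{(a, b). adj E a b}"
  have fV: "finite V" using g unfolding is_graph_def by blast
  have fE: "finite E" using graph_finE[OF g] by blast
  define d where "d v = (LEAST k. (v, r) \<in> ?R ^^ k)" for v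
  have ex: "\<exists>k. (v, r) \<in> ?R ^^ k" if "v \<in> V" for v
    using c r that unfolding connected_graph_def by (simp add: rtrancl_power)
  have dI: "(v, r) \<in> ?R ^^ d v" if "v \<in> V" for v
    unfolding d_def using ex[OF that] by (rule LeastI_ex)
  have par: "\<exists>u. adj E v u \<and> d u < d v" if vV: "v \<in> V" and vr: "v \<noteq> r" for v
  proof -
    have "d v \<noteq> 0" using dI[OF vV] vr by (metis relpow_0_E)
    then obtain m where m: "d v = Suc m" by (cases "d v") auto
    then obtain u where u: "(v,u) \<in> ?R" "(u, r) \<in> ?R ^^ m" using dI[OF vV]
      by (metis relpow_Suc_D2)
    have "d u \<le> m" unfolding d_def using u(2) by (rule Least_le)
    then show ?thesis using u m by auto
  qed
  define p where "p v = (SOME u. adj E v u \<and> d u < d v)" for v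
  have pp: "adj E v (p v) \<and> d (p v) < d v" if "v \<in> V" "v \<noteq> r" for v
    unfolding p_def using par[OF that] by (rule someI_ex)
  define f where "f v = {v, p v}" for v
  have sub: "f ` (V - {r}) \<subseteq> E" using pp unfolding f_def adj_def by auto
  have inj: "inj_on f (V - {r})"
  proof (rule inj_onI)
    fix x y assume x: "x \<in> V - {r}" and y: "y \<in> V - {r}" and e: "f x = f y"
    show "x = y"
    proof (rule ccontr)
      assume "x \<noteq> y"
      then have "x = p y" "p x = y" using e unfolding f_def by (auto simp: doubleton_eq_iff)
      then show False using pp[of x] pp[of y] x y by auto
    qed
  qed
  have "card (V - {r}) \<le> card E" using card_inj_on_le[OF inj sub fE] .
  then show ?thesis using r fV by (simp add: card_Diff_singleton)
qed

lemma rtrancl_sym: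
  assumes "sym R" "(a,b) \<in> R\<^sup>*" shows "(b,a) \<in> R\<^sup>*"
  using assms(2)
proof induct
  case base then show ?case by simp
next
  case (step y z)
  then have "(z,y) \<in> R" using assms(1) by (meson symD)
  then show ?case using step by (meson converse_rtrancl_into_rtrancl)
qed

definition walkp :: "'v set set \<Rightarrow> 'v list \<Rightarrow> bool" where
  "walkp E p \<longleftrightarrow> distinct p \<and> (\<forall>k. Suc k < length p \<longrightarrow> adj E (p ! k) (p ! Suc k))"

lemma walk_seg:
  assumes "\<And>k. j \<le> k \<Longrightarrow> Suc k \<le> m \<Longrightarrow> (p!k, p!Suc k) \<in> R" "j \<le> m"
  shows "(p!j, p!m) \<in> R\<^sup>*"
  using assms
proof (induction m)
  case 0 then show ?case by simp
next
  case (Suc m)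
  show ?case
  proof (cases "j = Suc m")
    case True then show ?thesis by simp
  next
    case False
    then have "(p!j, p!m) \<in> R\<^sup>*" using Suc by auto
    moreover have "(p!m, p!Suc m) \<in> R" using Suc.prems False by auto
    ultimately show ?thesis by (rule rtrancl_into_rtrancl)
  qed
qed

lemma no_cycle:
  assumes t: "is_tree V E" and w: "walkp E p" and jm: "j + 2 \<le> m" "m < length p"
  shows "\<not> adj E (p!m) (p!j)"
proof
  assume a: "adj E (p!m) (p!j)"
  let ?e = "{p!m, p!j}"
  let ?E' = "E - {?e}"
  let ?R = "{(a, b). adj E a b}"
  let ?R' = "{(a, b). adj ?E' a b}"
  have g: "is_graph V E" and V: "V \<noteq> {}" and c: "connected_graph V E" and cd: "card E + 1 = card V"
    using t unfolding is_tree_def by auto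
  have eE: "?e \<in> E" using a unfolding adj_def by auto
  have g': "is_graph V ?E'" unfolding is_graph_def
  proof (intro conjI ballI)
    show "finite V" using g unfolding is_graph_def by (rule conjunct1)
    have A: "\<forall>e\<in>E. \<exists>u v. e = {u, v} \<and> u \<noteq> v \<and> u \<in> V \<and> v \<in> V"
      using g unfolding is_graph_def by (rule conjunct2)
    fix e assume "e \<in> ?E'"
    then have "e \<in> E" by simp
    with A show "\<exists>u v. e = {u, v} \<and> u \<noteq> v \<and> u \<in> V \<and> v \<in> V" by (rule bspec)
  qed
  have dist: "distinct p" using w unfolding walkp_def by auto
  have symR': "sym ?R'"
  proof (rule symI)
    fix a b assume "(a,b) \<in> ?R'"
    then show "(b,a) \<in> ?R'" using adj_sym[of ?E' a b] by simp
  qed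
  have seg: "(p!j, p!m) \<in> ?R'\<^sup>*"
  proof (rule walk_seg)
    fix k assume k: "j \<le> k" "Suc k \<le> m"
    have ad: "adj E (p!k) (p!Suc k)" using w k jm unfolding walkp_def by simp
    have "{p!k, p!Suc k} \<noteq> ?e"
    proof
      assume "{p!k, p!Suc k} = ?e"
      then have o: "(p!k = p!m \<and> p!Suc k = p!j) \<or> (p!k = p!j \<and> p!Suc k = p!m)"
        unfolding doubleton_eq_iff by blast
      have l: "k < length p" "Suc k < length p" "j < length p" using k jm by simp_all
      have "(k = m \<and> Suc k = j) \<or> (k = j \<and> Suc k = m)"
        using o nth_eq_iff_index_eq[OF dist l(1) jm(2)] nth_eq_iff_index_eq[OF dist l(2) l(3)]
          nth_eq_iff_index_eq[OF dist l(1) l(3)] nth_eq_iff_index_eq[OF dist l(2) jm(2)] by blast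
      then show False using k jm by linarith
    qed
    then show "(p!k, p!Suc k) \<in> ?R'" using ad unfolding adj_def by auto
  next
    show "j \<le> m" using jm by simp
  qed
  have RR: "?R \<subseteq> ?R'\<^sup>*"
  proof
    fix x assume "x \<in> ?R"
    then obtain a b where x: "x = (a,b)" "adj E a b" by auto
    show "x \<in> ?R'\<^sup>*"
    proof (cases "{a,b} = ?e")
      case True
      then have "(a = p!m \<and> b = p!j) \<or> (a = p!j \<and> b = p!m)" unfolding doubleton_eq_iff by blast
      then show ?thesis using seg rtrancl_sym[OF symR' seg] x(1) by blast
    next
      case False
      then show ?thesis using x unfolding adj_def by auto
    qed
  qed
  have c': "connected_graph V ?E'"
    unfolding connected_graph_def
  proof (intro ballI)
    fix x y assume "x \<in> V" "y \<in> V"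
    then have "(x,y) \<in> ?R\<^sup>*" using c unfolding connected_graph_def by simp
    then show "(x,y) \<in> ?R'\<^sup>*" using rtrancl_subset_rtrancl[OF RR] by (rule subsetD[rotated])
  qed
  obtain r where "r \<in> V" using V by blast
  from conn_card[OF g' c' this] have "card V \<le> card ?E' + 1" .
  moreover have "card ?E' = card E - 1" using eE graph_finE(1)[OF g] by simp
  moreover have "card E \<ge> 1" using eE graph_finE(1)[OF g] card_gt_0_iff[of E] by (auto simp: Suc_le_eq)
  ultimately show False using cd by linarith
qed


lemma walkp_rev: assumes "walkp E p" shows "walkp E (rev p)"
  unfolding walkp_def
proof (intro conjI allI impI)
  show "distinct (rev p)" using assms unfolding walkp_def by simp
  fix k assume k: "Suc k < length (rev p)"
  define k' where "k' = length p - Suc (Suc k)"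
  have 1: "rev p ! k = p ! Suc k'" "rev p ! Suc k = p ! k'" "Suc k' < length p"
    using k unfolding k'_def by (auto simp: rev_nth Suc_diff_Suc)
  show "adj E (rev p ! k) (rev p ! Suc k)" using assms 1 unfolding walkp_def by (simp add: adj_sym)
qed

lemma path_edges_rev_sub: "path_edges (rev p) \<subseteq> path_edges p"
proof
  fix x assume "x \<in> path_edges (rev p)"
  then obtain k where x: "x = {rev p ! k, rev p ! Suc k}" "Suc k < length p"
    unfolding path_edges_def by auto
  define k' where "k' = length p - Suc (Suc k)"
  have 1: "rev p ! k = p ! Suc k'" "rev p ! Suc k = p ! k'" "Suc k' < length p"
    using x unfolding k'_def by (auto simp: rev_nth Suc_diff_Suc)
  have "x = {p!k', p!Suc k'}" using x 1 by auto
  then show "x \<in> path_edges p" using 1 unfolding path_edges_def by blast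
qed

lemma path_edges_rev: "path_edges (rev p) = path_edges p"
  using path_edges_rev_sub[of p] path_edges_rev_sub[of "rev p"] by auto

locale nlt =
  fixes n :: nat and V :: "'v set" and E :: "'v set set" and lf :: "nat \<Rightarrow> 'v"
  assumes n3: "n \<ge> 3" and T: "n_leaf_tree n V E lf"
begin

lemma tree: "is_tree V E" and g: "is_graph V E" and injlf: "inj_on lf {1..n}"
  and lfV: "lf ` {1..n} \<subseteq> V" and deg1: "\<And>i. i \<in> {1..n} \<Longrightarrow> degree E (lf i) = 1"
  and deg3: "\<And>v. v \<in> V - lf ` {1..n} \<Longrightarrow> degree E v = 3"
  using T unfolding n_leaf_tree_def is_tree_def by auto

lemma fE: "finite E" using graph_finE[OF g] by blast

lemma le_unique:
  assumes k: "k \<in> {1..n}"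
  shows "leaf_edge E lf k \<in> E" "lf k \<in> leaf_edge E lf k"
    "\<And>e. e \<in> E \<Longrightarrow> lf k \<in> e \<Longrightarrow> e = leaf_edge E lf k"
proof -
  have "card {e \<in> E. lf k \<in> e} = 1" using deg1[OF k] unfolding degree_def .
  then obtain e0 where e0: "{e \<in> E. lf k \<in> e} = {e0}" by (rule card_1_singletonE)
  have th: "leaf_edge E lf k = e0" unfolding leaf_edge_def
    by (rule the_equality) (use e0 in auto)
  show "leaf_edge E lf k \<in> E" "lf k \<in> leaf_edge E lf k" using th e0 by auto
  show "\<And>e. e \<in> E \<Longrightarrow> lf k \<in> e \<Longrightarrow> e = leaf_edge E lf k" using th e0 by auto
qed

lemma nb_card:
  assumes u: "u \<in> V" "u \<notin> lf ` {1..n}"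
  shows "card {c. adj E u c} = 3"
proof -
  have "bij_betw (\<lambda>c. {u, c}) {c. adj E u c} {e \<in> E. u \<in> e}"
  proof (rule bij_betwI')
    show "\<And>x y. x \<in> {c. adj E u c} \<Longrightarrow> y \<in> {c. adj E u c} \<Longrightarrow> ({u, x} = {u, y}) = (x = y)"
      by (auto simp: doubleton_eq_iff)
    show "\<And>x. x \<in> {c. adj E u c} \<Longrightarrow> {u, x} \<in> {e \<in> E. u \<in> e}" unfolding adj_def by auto
    fix y assume y: "y \<in> {e \<in> E. u \<in> e}"
    then obtain a b where ab: "y = {a,b}" "a \<noteq> b" using g unfolding is_graph_def by blast
    show "\<exists>x\<in>{c. adj E u c}. y = {u, x}"
    proof (cases "u = a")
      case True then show ?thesis using ab y unfolding adj_def by auto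
    next
      case False then have "u = b" using ab y by auto
      then show ?thesis using ab y unfolding adj_def by (auto simp: insert_commute)
    qed
  qed
  then have "card {c. adj E u c} = card {e \<in> E. u \<in> e}" by (rule bij_betw_same_card)
  also have "\<dots> = 3" using deg3[of u] u unfolding degree_def by auto
  finally show ?thesis .
qed

lemma end_leaf:
  assumes i: "i \<in> {1..n}" and pP: "walkp E p" "lf i \<notin> set p" "e \<in> path_edges p"
    and mx: "\<forall>q. walkp E q \<and> lf i \<notin> set q \<and> e \<in> path_edges q \<longrightarrow> length q \<le> length p"
  shows "last p \<in> lf ` ({1..n} - {i})"
proof -
  obtain k0 where "Suc k0 < length p" using pP(3) unfolding path_edges_def by auto
  define m where "m = length p - 1"
  have m1: "m \<ge> 1" "m < length p" "Suc (m - 1) = m" using \<open>Suc k0 < length p\<close> unfolding m_def by auto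
  have lastp: "last p = p!m" unfolding m_def using m1 by (metis last_conv_nth list.size(3) not_less_zero)
  have dist: "distinct p" using pP unfolding walkp_def by auto
  have adjpred: "adj E (p!(m-1)) (p!m)" using pP(1) m1 unfolding walkp_def by (metis)
  have uV: "p!m \<in> V" using adj_in_V[OF g adjpred] by simp
  show ?thesis
  proof (rule ccontr)
    assume nl: "last p \<notin> lf ` ({1..n} - {i})"
    have nl2: "p!m \<notin> lf ` {1..n}"
    proof
      assume "p!m \<in> lf ` {1..n}"
      then obtain k where k: "k \<in> {1..n}" "p!m = lf k" by auto
      show False
      proof (cases "k = i")
        case True then show False using k pP(2) m1 by (metis nth_mem)
      next
        case False then show False using k nl lastp by auto
      qed
    qed
    let ?Nb = "{c. adj E (p!m) c}"
    have c3: "card ?Nb = 3" using nb_card[OF uV nl2] .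
    have "card ?Nb - card {p!(m-1), lf i} \<le> card (?Nb - {p!(m-1), lf i})"
      by (rule diff_card_le_card_Diff) simp
    moreover have "card {p!(m-1), lf i} \<le> 2" by (simp add: card_insert_if)
    ultimately have "card (?Nb - {p!(m-1), lf i}) \<noteq> 0" using c3 by linarith
    then obtain c where c: "adj E (p!m) c" "c \<noteq> p!(m-1)" "c \<noteq> lf i"
      by (metis (no_types, lifting) DiffE card.empty ex_in_conv insertCI mem_Collect_eq)
    show False
    proof (cases "c \<in> set p")
      case True
      then obtain j where j: "j < length p" "p!j = c" by (auto simp: in_set_conv_nth)
      have "j \<noteq> m" using c(1) j unfolding adj_def by auto
      moreover have "j \<noteq> m - 1" using c(2) j by auto
      moreover have "j \<le> m" using j unfolding m_def by auto
      ultimately have "j + 2 \<le> m" by linarith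
      from no_cycle[OF tree pP(1) this m1(2)] show False using c(1) j by simp
    next
      case False
      let ?q = "p @ [c]"
      have "walkp E ?q" unfolding walkp_def
      proof (intro conjI allI impI)
        show "distinct ?q" using dist False by simp
        fix k assume k: "Suc k < length ?q"
        show "adj E (?q ! k) (?q ! Suc k)"
        proof (cases "Suc k < length p")
          case True then show ?thesis using pP(1) unfolding walkp_def by (simp add: nth_append)
        next
          case False
          then have "k = m" "Suc k = length p" using k m1 unfolding m_def by auto
          then show ?thesis using c(1) m1 by (simp add: nth_append)
        qed
      qed
      moreover have "lf i \<notin> set ?q" using pP(2) c(3) by simp
      moreover have "e \<in> path_edges ?q"
      proof -
        obtain k where "e = {p!k, p!Suc k}" "Suc k < length p" using pP(3) unfolding path_edges_def by auto
        then have "e = {?q!k, ?q!Suc k}" "Suc k < length ?q" by (auto simp: nth_append)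
        then show ?thesis unfolding path_edges_def by blast
      qed
      ultimately have "length ?q \<le> length p" using mx by blast
      then show False by simp
    qed
  qed
qed

lemma key:
  assumes i: "i \<in> {1..n}" and e: "e \<in> E" and li: "lf i \<notin> e"
  shows "\<exists>j\<in>{1..n}-{i}. \<exists>k\<in>{1..n}-{i}. \<exists>p. path_from_to E p (lf j) (lf k) \<and> e \<in> path_edges p"
proof -
  obtain a b where ab: "e = {a,b}" "a \<noteq> b" "a \<in> V" "b \<in> V" using g e unfolding is_graph_def by blast
  define P where "P q \<longleftrightarrow> walkp E q \<and> lf i \<notin> set q \<and> e \<in> path_edges q" for q
  have P0: "P [a,b]" unfolding P_def walkp_def
  proof (intro conjI allI impI)
    show "distinct [a,b]" using ab by simp
    fix k assume "Suc k < length [a,b]"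
    then have "k = 0" by simp
    then show "adj E ([a,b]!k) ([a,b]!Suc k)" using ab e unfolding adj_def by simp
  next
    show "lf i \<notin> set [a,b]" using li ab by simp
    have "e = {[a,b]!0, [a,b]!Suc 0}" "Suc 0 < length [a,b]" using ab by auto
    then show "e \<in> path_edges [a,b]" unfolding path_edges_def by blast
  qed
  have bnd: "length q < card V + 1" if "P q" for q
  proof -
    have w: "walkp E q" and pe: "e \<in> path_edges q" using that unfolding P_def by auto
    obtain k0 where k0: "Suc k0 < length q" using pe unfolding path_edges_def by auto
    have "set q \<subseteq> V"
    proof
      fix x assume "x \<in> set q"
      then obtain t where t: "t < length q" "q!t = x" by (auto simp: in_set_conv_nth)
      show "x \<in> V"
      proof (cases "Suc t < length q")
        case True then show ?thesis using w t adj_in_V(1)[OF g] unfolding walkp_def by blast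
      next
        case False
        then have "t = Suc (t - 1)" "Suc (t-1) < length q" using k0 t by auto
        then have "adj E (q!(t-1)) (q!t)" using w unfolding walkp_def by metis
        then show ?thesis using t adj_in_V(2)[OF g] by blast
      qed
    qed
    then have "card (set q) \<le> card V" using g unfolding is_graph_def by (simp add: card_mono)
    then show ?thesis using w unfolding walkp_def by (simp add: distinct_card)
  qed
  obtain p where p: "P p" and mx: "\<forall>q. P q \<longrightarrow> length q \<le> length p"
    using ex_has_greatest_nat[of P "[a,b]" length "card V + 1"] P0 bnd by blast
  have l1: "last p \<in> lf ` ({1..n} - {i})"
    using end_leaf[OF i _ _ _ mx[unfolded P_def]] p unfolding P_def by blast
  have pr: "P (rev p)" using p walkp_rev[of E p] unfolding P_def by (simp add: path_edges_rev)
  have mx2: "\<forall>q. P q \<longrightarrow> length q \<le> length (rev p)" using mx by simp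
  have l2: "last (rev p) \<in> lf ` ({1..n} - {i})"
    using end_leaf[OF i _ _ _ mx2[unfolded P_def]] pr unfolding P_def by blast
  have ne: "p \<noteq> []" using p unfolding P_def path_edges_def by auto
  have hdl: "hd p \<in> lf ` ({1..n} - {i})" using l2 ne last_rev[of p] by metis
  obtain j where j: "j \<in> {1..n} - {i}" "hd p = lf j" using imageE[OF hdl] by metis
  obtain k where k: "k \<in> {1..n} - {i}" "last p = lf k" using imageE[OF l1] by metis
  have wp: "walkp E p" and ep: "e \<in> path_edges p" using p unfolding P_def by simp_all
  have pf: "path_from_to E p (lf j) (lf k)" unfolding path_from_to_def
    using ne j(2) k(2) wp unfolding walkp_def by simp
  show ?thesis
    by (rule bexI[OF _ j(1)], rule bexI[OF _ k(1)]) (rule exI[of _ p], rule conjI[OF pf ep])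
qed


lemma le_inj: "inj_on (leaf_edge E lf) {1..n}"
proof (rule inj_onI, rule ccontr)
  fix a b assume a: "a \<in> {1..n}" and b: "b \<in> {1..n}" and eq: "leaf_edge E lf a = leaf_edge E lf b"
    and ne: "a \<noteq> b"
  let ?e = "leaf_edge E lf a"
  have eE: "?e \<in> E" and la: "lf a \<in> ?e" and lb: "lf b \<in> ?e"
    using le_unique(1,2)[OF a] le_unique(2)[OF b] eq by simp_all
  have lne: "lf a \<noteq> lf b" using injlf a b ne by (meson inj_onD)
  obtain x y where xy: "?e = {x,y}" using g eE unfolding is_graph_def by blast
  have e2: "?e = {lf a, lf b}" using xy la lb lne by auto
  have "\<not> {1..n} \<subseteq> {a,b}"
  proof
    assume "{1..n} \<subseteq> {a,b}"
    then have "card {1..n} \<le> card {a,b}" by (rule card_mono[rotated]) simp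
    also have "\<dots> \<le> 2" by (simp add: card_insert_if)
    finally show False using n3 by simp
  qed
  then obtain c where c: "c \<in> {1..n}" "c \<noteq> a" "c \<noteq> b" by blast
  have cg: "connected_graph V E" using tree unfolding is_tree_def by simp
  have la': "lf a \<in> V" and lc': "lf c \<in> V" using lfV a c by auto
  have conn: "(lf a, lf c) \<in> {(x, y). adj E x y}\<^sup>*"
    using cg la' lc' unfolding connected_graph_def by simp
  have "lf c \<in> {lf a, lf b}"
    using conn
  proof (induction rule: rtrancl_induct)
    case base then show ?case by simp
  next
    case (step y z)
    then have yz: "{y,z} \<in> E" "y \<in> {lf a, lf b}" unfolding adj_def by auto
    have "{y,z} = ?e"
    proof (cases "y = lf a")
      case True then show ?thesis using le_unique(3)[OF a yz(1)] by simp
    next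
      case False then have "y = lf b" using yz(2) by simp
      then show ?thesis using le_unique(3)[OF b yz(1)] eq by simp
    qed
    then show ?case using e2 by auto
  qed
  then have "lf c = lf a \<or> lf c = lf b" by simp
  then have "c = a \<or> c = b" using inj_onD[OF injlf _ c(1) a] inj_onD[OF injlf _ c(1) b] by blast
  then show False using c by simp
qed

lemma path_leaf:
  assumes p: "path_from_to E p (lf a) (lf b)" and ep: "e \<in> path_edges p"
    and k: "k \<in> {1..n}" and lk: "lf k \<in> e" and a: "a \<in> {1..n}" and b: "b \<in> {1..n}"
  shows "k = a \<or> k = b"
proof -
  obtain m where m: "e = {p!m, p!Suc m}" "Suc m < length p" using ep unfolding path_edges_def by auto
  have dist: "distinct p" and ad: "\<And>k. Suc k < length p \<Longrightarrow> adj E (p!k) (p!Suc k)"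
    and hd: "hd p = lf a" and lst: "last p = lf b" and ne: "p \<noteq> []"
    using p unfolding path_from_to_def by auto
  have "lf k = p!m \<or> lf k = p!Suc m" using m(1) lk by simp
  then obtain t where t: "t < length p" "p!t = lf k"
  proof (elim disjE)
    assume "lf k = p!m" then show thesis using m(2) that[of m] by simp
  next
    assume "lf k = p!Suc m" then show thesis using m(2) that[of "Suc m"] by simp
  qed
  have "t = 0 \<or> t = length p - 1"
  proof (rule ccontr)
    assume "\<not> (t = 0 \<or> t = length p - 1)"
    then have t2: "t = Suc (t - 1)" "Suc t < length p" using t by auto
    have a1: "adj E (p!(t-1)) (p!t)" using ad[of "t-1"] t2 by simp
    have a2: "adj E (p!t) (p!Suc t)" using ad t2 by simp
    have E1: "{p!(t-1), p!t} \<in> E" and E2: "{p!t, p!Suc t} \<in> E" using a1 a2 unfolding adj_def by simp_all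
    have L1: "lf k \<in> {p!(t-1), p!t}" and L2: "lf k \<in> {p!t, p!Suc t}" using t(2) by simp_all
    have "{p!(t-1), p!t} = leaf_edge E lf k" "{p!t, p!Suc t} = leaf_edge E lf k"
      using le_unique(3)[OF k E1 L1] le_unique(3)[OF k E2 L2] by simp_all
    then have "{p!(t-1), p!t} = {p!t, p!Suc t}" by simp
    moreover have "p!(t-1) \<noteq> p!t" using a1 unfolding adj_def by simp
    ultimately have "p!(t-1) = p!Suc t" by (auto simp: doubleton_eq_iff)
    then have "t - 1 = Suc t" using dist t2 by (simp add: nth_eq_iff_index_eq)
    then show False by simp
  qed
  then show ?thesis
  proof
    assume "t = 0"
    then have "lf k = lf a" using t hd ne by (simp add: hd_conv_nth)
    then show ?thesis using injlf k a by (meson inj_onD)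
  next
    assume "t = length p - 1"
    then have "lf k = lf b" using t lst ne by (simp add: last_conv_nth)
    then show ?thesis using injlf k b by (meson inj_onD)
  qed
qed

lemma span_sub: "spanning_edges E lf S \<subseteq> E" unfolding spanning_edges_def by auto

lemma span_N: "spanning_edges E lf {1..n} = E"
proof
  show "E \<subseteq> spanning_edges E lf {1..n}"
  proof
    fix e assume e: "e \<in> E"
    obtain x y where xy: "e = {x,y}" using g e unfolding is_graph_def by blast
    have "\<not> lf ` {1..n} \<subseteq> e"
    proof
      assume "lf ` {1..n} \<subseteq> e"
      then have "card (lf ` {1..n}) \<le> card e" using xy by (simp add: card_mono)
      also have "\<dots> \<le> 2" using xy by (simp add: card_insert_if)
      finally show False using n3 card_image[OF injlf] by simp
    qed
    then obtain i where i: "i \<in> {1..n}" "lf i \<notin> e" by blast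
    from key[OF i(1) e i(2)] show "e \<in> spanning_edges E lf {1..n}"
      unfolding spanning_edges_def using e by blast
  qed
qed (rule span_sub)

lemma span_minus: assumes i: "i \<in> {1..n}"
  shows "E - {leaf_edge E lf i} \<subseteq> spanning_edges E lf ({1..n} - {i})"
proof
  fix e assume e: "e \<in> E - {leaf_edge E lf i}"
  then have "lf i \<notin> e" using le_unique(3)[OF i, of e] by blast
  from key[OF i _ this] e show "e \<in> spanning_edges E lf ({1..n} - {i})"
    unfolding spanning_edges_def by blast
qed

lemma EL: "E - leaf_edge E lf ` {1..n} = {e. internal_edge n E lf e}"
proof (intro equalityI subsetI)
  fix e assume e: "e \<in> E - leaf_edge E lf ` {1..n}"
  have "lf i \<notin> e" if i: "i \<in> {1..n}" for i
  proof
    assume "lf i \<in> e"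
    then have "e = leaf_edge E lf i" using le_unique(3)[OF i] e by simp
    then show False using e i by simp
  qed
  then show "e \<in> {e. internal_edge n E lf e}" using e unfolding internal_edge_def by simp
next
  fix e assume e: "e \<in> {e. internal_edge n E lf e}"
  then have eE: "e \<in> E" and nl: "\<And>i. i \<in> {1..n} \<Longrightarrow> lf i \<notin> e" unfolding internal_edge_def by auto
  have "e \<notin> leaf_edge E lf ` {1..n}"
  proof
    assume "e \<in> leaf_edge E lf ` {1..n}"
    then obtain i where i: "i \<in> {1..n}" "e = leaf_edge E lf i" by blast
    then show False using nl[OF i(1)] le_unique(2)[OF i(1)] by simp
  qed
  then show "e \<in> E - leaf_edge E lf ` {1..n}" using eE by simp
qed

end

theorem theorem12:
  fixes n :: nat and V :: "'v set" and E :: "'v set set" and lf :: "nat \<Rightarrow> 'v"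
    and w :: "'v set \<Rightarrow> real"
  assumes "n \<ge> 3"
    and "n_leaf_tree n V E lf"
    and "\<forall>e\<in>E. w e \<ge> 0"
  shows "((\<forall>e. internal_edge n E lf e \<longrightarrow> w e = 0) \<longrightarrow>
            core n (tree_game E lf w) = {leaf_weights n E lf w})
       \<and> ((\<exists>e. internal_edge n E lf e \<and> w e > 0) \<longrightarrow>
            core n (tree_game E lf w) = {})"
proof -
  interpret nlt n V E lf using assms(1,2) by unfold_locales
  have w0: "\<And>e. e \<in> E \<Longrightarrow> w e \<ge> 0" using assms(3) by blast
  let ?N = "{1..n}"
  let ?le = "leaf_edge E lf"
  let ?L = "?le ` ?N"
  let ?a = "leaf_weights n E lf w"
  let ?v = "tree_game E lf w"
  define W where "W = sum w E"
  have LE: "?L \<subseteq> E" using le_unique(1) by blast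
  have aN: "\<And>k. k \<in> ?N \<Longrightarrow> ?a k = w (?le k)" unfolding leaf_weights_def by simp
  have sumL: "sum w ?L = sum ?a ?N"
    using sum.reindex[OF le_inj, of w] aN by simp
  have Wd: "W = sum ?a ?N + sum w (E - ?L)"
    unfolding W_def using sum.subset_diff[OF LE fE, of w] sumL by simp
  have vN: "?v ?N = W" unfolding tree_game_def W_def span_N ..
  have fin_sp: "\<And>S. finite (spanning_edges E lf S)" using span_sub fE finite_subset by blast
  have ub: "x i \<le> ?a i" if x: "x \<in> core n ?v" and i: "i \<in> ?N" for x i
  proof -
    have "sum x (?N - {i}) \<ge> ?v (?N - {i})" using x unfolding core_def by auto
    moreover have "sum x (?N - {i}) = sum x ?N - x i" using i by (simp add: sum_diff1)
    moreover have "sum x ?N = W" using x vN unfolding core_def by auto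
    moreover have "?v (?N - {i}) \<ge> sum w (E - {?le i})"
      unfolding tree_game_def
      by (rule sum_mono2[OF fin_sp span_minus[OF i]]) (use w0 span_sub in blast)
    moreover have "sum w (E - {?le i}) = W - w (?le i)"
      unfolding W_def using le_unique(1)[OF i] fE by (simp add: sum_diff1)
    ultimately show ?thesis using aN[OF i] by linarith
  qed
  have sumx: "sum x ?N = W" if "x \<in> core n ?v" for x using that vN unfolding core_def by auto
  show ?thesis
  proof (intro conjI impI)
    assume iz: "\<forall>e. internal_edge n E lf e \<longrightarrow> w e = 0"
    have z: "sum w (E - ?L) = 0" using iz EL by (simp add: sum.neutral)
    have WN: "W = sum ?a ?N" using Wd z by simp
    show "core n ?v = {?a}"
    proof
      show "core n ?v \<subseteq> {?a}"
      proof
        fix x assume x: "x \<in> core n ?v"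
        have eqN: "\<forall>i\<in>?N. x i = ?a i"
        proof (rule ccontr)
          assume "\<not> (\<forall>i\<in>?N. x i = ?a i)"
          then obtain i where "i \<in> ?N" "x i < ?a i" using ub[OF x] by force
          then have "sum x ?N < sum ?a ?N"
            using ub[OF x] by (intro sum_strict_mono_ex1) auto
          then show False using sumx[OF x] WN by simp
        qed
        have "x = ?a"
        proof
          fix i show "x i = ?a i"
          proof (cases "i \<in> ?N")
            case True then show ?thesis using eqN by blast
          next
            case False then show ?thesis using x unfolding core_def leaf_weights_def by auto
          qed
        qed
        then show "x \<in> {?a}" by simp
      qed
    next
      have "?a \<in> core n ?v" unfolding core_def
      proof (intro CollectI conjI allI impI)
        show "\<And>i. i \<notin> ?N \<Longrightarrow> ?a i = 0" unfolding leaf_weights_def by auto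
        show "sum ?a ?N = ?v ?N" using vN WN by simp
        fix S assume S: "S \<subseteq> ?N"
        have sub: "spanning_edges E lf S \<subseteq> ?le ` S \<union> (E - ?L)"
        proof
          fix e assume e: "e \<in> spanning_edges E lf S"
          then obtain a b p where ab: "a \<in> S" "b \<in> S" "path_from_to E p (lf a) (lf b)" "e \<in> path_edges p"
            and eE: "e \<in> E" unfolding spanning_edges_def by blast
          show "e \<in> ?le ` S \<union> (E - ?L)"
          proof (cases "e \<in> ?L")
            case True
            then obtain k where k: "k \<in> ?N" "e = ?le k" by blast
            then have "lf k \<in> e" using le_unique(2)[OF k(1)] by simp
            then have "k = a \<or> k = b" using path_leaf[OF ab(3) ab(4) k(1)] ab S by blast
            then show ?thesis using k ab by blast
          next
            case False then show ?thesis using eE by blast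
          qed
        qed
        have fin2: "finite (?le ` S \<union> (E - ?L))" using S fE by (simp add: finite_subset)
        have "?v S \<le> sum w (?le ` S \<union> (E - ?L))"
          unfolding tree_game_def
          by (rule sum_mono2[OF fin2 sub]) (use w0 LE S in blast)
        also have "\<dots> = sum w (?le ` S) + sum w (E - ?L)"
          by (rule sum.union_disjoint) (use S fE finite_subset in auto)
        also have "\<dots> = sum w (?le ` S)" using z by simp
        also have "\<dots> = sum ?a S"
          using sum.reindex[OF inj_on_subset[OF le_inj S], of w] aN S by (simp add: subset_iff)
        finally show "sum ?a S \<ge> ?v S" .
      qed
      then show "{?a} \<subseteq> core n ?v" by simp
    qed
  next
    assume "\<exists>e. internal_edge n E lf e \<and> w e > 0"
    then obtain f where f: "internal_edge n E lf f" "w f > 0" by blast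
    have fEL: "f \<in> E - ?L" using EL f by blast
    have "w f \<le> sum w (E - ?L)"
      by (rule member_le_sum[OF fEL]) (use w0 fE in auto)
    show "core n ?v = {}"
    proof (rule ccontr)
      assume "core n ?v \<noteq> {}"
      then obtain x where x: "x \<in> core n ?v" by blast
      have "sum x ?N \<le> sum ?a ?N" using ub[OF x] by (rule sum_mono)
      then show False using sumx[OF x] Wd f(2) \<open>w f \<le> sum w (E - ?L)\<close> by linarith
    qed
  qed
qed

end
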